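(* Let $n$ be a positive integer and $w_1\le\dots\le w_m$ a feasible partition of $n$ with partial sums $R_i=w_1+\dots+w_i$, $R_0=0$. Then for every $1\le i\le m$, $R_i \ge \frac{3w_i-1}{2}$.
   Context: A weighing partition of a positive integer $n$ is a multiset of positive integers summing to $n$ such that every integer $\ell$ with $1\le\ell\le n$ is a sum $\sum_j u_jw_j$ with $u_j\in\{-1,0,1\}$. A feasible partition of $n$ is a weighing partition of $n$ whose number of parts $m$ is minimal among all weighing partitions of $n$, written $w_1\le\dots\le w_m$. *)

theory Defs
  imports Complex_Main
begin

text \<open>A partition is represented by the list of its parts (w_1, ..., w_m);
  the multiset of parts is mset ws. Part j (0-based) is ws ! j.\<close>

definition weighing_partition :: "nat \<Rightarrow> nat list \<Rightarrow> bool" where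
  "weighing_partition n ws \<longleftrightarrow>
     (\<forall>w\<in>set ws. 0 < w) \<and> sum_list ws = n \<and>
     (\<forall>l\<in>{1..n}. \<exists>u :: nat \<Rightarrow> int.
        (\<forall>j<length ws. u j \<in> {-1, 0, 1}) \<and>
        int l = (\<Sum>j<length ws. u j * int (ws ! j)))"

definition feasible_partition :: "nat \<Rightarrow> nat list \<Rightarrow> bool" where
  "feasible_partition n ws \<longleftrightarrow>
     weighing_partition n ws \<and> sorted ws \<and>
     (\<forall>vs. weighing_partition n vs \<longrightarrow> length ws \<le> length vs)"

end

theory Submission
  imports Defs
begin

lemma sum_take_nth: "k \<le> length xs \<Longrightarrow> sum_list (take k xs) = (\<Sum>j<k. xs ! j)"
  by (simp add: sum_list_sum_nth atLeast0LessThan min_def)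

lemma key:
  fixes n :: nat and ws :: "nat list" and k :: nat
  assumes wp: "weighing_partition n ws" and so: "sorted ws" and kl: "k < length ws"
  shows "ws ! k \<le> 2 * sum_list (take k ws) + 1"
proof (rule ccontr)
  define N where "N = length ws"
  define f where "f j = int (ws ! j)" for j
  define R where "R = sum_list (take k ws)"
  assume "\<not> ws ! k \<le> 2 * sum_list (take k ws) + 1"
  hence big: "ws ! k \<ge> 2 * R + 2" unfolding R_def by simp
  have sn: "n = sum_list ws" using wp unfolding weighing_partition_def by simp
  have nN: "int n = (\<Sum>j<N. f j)" unfolding sn N_def f_def
    by (simp add: sum_list_sum_nth atLeast0LessThan)
  have Rk: "int R = (\<Sum>j<k. f j)" unfolding R_def f_def using kl
    by (simp add: sum_take_nth)
  have split: "{..<N} = {..<k} \<union> {k..<N}" using kl N_def by auto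
  have sumsplit: "\<And>g::nat\<Rightarrow>int. (\<Sum>j<N. g j) = (\<Sum>j<k. g j) + (\<Sum>j\<in>{k..<N}. g j)"
    unfolding split by (subst sum.union_disjoint) auto
  have ge: "\<And>j. j \<in> {k..<N} \<Longrightarrow> f j \<ge> f k"
    unfolding f_def N_def using so by (simp add: sorted_nth_mono)
  have take_le: "sum_list (take (Suc k) ws) \<le> n" unfolding sn
    by (metis append_take_drop_id le_add1 sum_list_append)
  have "sum_list (take (Suc k) ws) = R + ws ! k" unfolding R_def using kl
    by (simp add: take_Suc_conv_app_nth)
  hence nge: "n \<ge> R + ws ! k" using take_le by simp
  define l where "l = n - 2 * R - 1"
  have l1: "l \<in> {1..n}" unfolding l_def using nge big by auto
  then obtain u :: "nat \<Rightarrow> int" where u: "\<forall>j<N. u j \<in> {-1,0,1}"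
      and lu: "int l = (\<Sum>j<N. u j * f j)"
    using wp unfolding weighing_partition_def N_def f_def by blast
  have lint: "int l = int n - 2 * int R - 1" unfolding l_def using nge big by simp
  have fnn: "\<And>j. f j \<ge> 0" unfolding f_def by simp
  have ule: "\<And>j. j < N \<Longrightarrow> u j * f j \<le> f j"
  proof -
    fix j assume "j < N" hence "u j \<in> {-1,0,1}" using u by auto
    thus "u j * f j \<le> f j" using fnn[of j] by auto
  qed
  have uge: "\<And>j. j < N \<Longrightarrow> u j * f j \<ge> - f j"
  proof -
    fix j assume "j < N" hence "u j \<in> {-1,0,1}" using u by auto
    thus "u j * f j \<ge> - f j" using fnn[of j] by auto
  qed
  show False
  proof (cases "\<exists>j0\<in>{k..<N}. u j0 \<noteq> 1")
    case True
    then obtain j0 where j0: "j0 \<in> {k..<N}" "u j0 \<noteq> 1" by blast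
    have "u j0 \<in> {-1,0,1}" using u j0 by auto
    hence u0: "u j0 * f j0 \<le> 0" using j0 fnn[of j0] by auto
    have fin: "finite {..<N}" by simp
    have j0in: "j0 \<in> {..<N}" using j0 by auto
    have "(\<Sum>j<N. u j * f j) = u j0 * f j0 + (\<Sum>j\<in>{..<N}-{j0}. u j * f j)"
      using sum.remove[OF fin j0in] by simp
    also have "\<dots> \<le> 0 + (\<Sum>j\<in>{..<N}-{j0}. f j)"
      using u0 by (intro add_mono sum_mono) (auto intro: ule)
    also have "(\<Sum>j\<in>{..<N}-{j0}. f j) = (\<Sum>j<N. f j) - f j0"
      using sum.remove[OF fin j0in, of f] by simp
    finally have "int l \<le> int n - f j0" using lu nN by simp
    moreover have "f j0 \<ge> f k" using ge j0 by simp
    moreover have "f k \<ge> 2 * int R + 2" unfolding f_def using big by simp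
    ultimately show False using lint by simp
  next
    case False
    hence "(\<Sum>j\<in>{k..<N}. u j * f j) = (\<Sum>j\<in>{k..<N}. f j)" by (intro sum.cong) auto
    moreover have "(\<Sum>j<k. u j * f j) \<ge> (\<Sum>j<k. - f j)"
      using kl N_def by (intro sum_mono uge) auto
    ultimately have "int l \<ge> - int R + (int n - int R)"
      using lu sumsplit[of "\<lambda>j. u j * f j"] sumsplit[of f] nN Rk
      by (simp add: sum_negf)
    thus False using lint by simp
  qed
qed

theorem mainTheorem4:
  fixes n :: nat and ws :: "nat list" and i :: nat
  assumes "0 < n"
    and "feasible_partition n ws"
    and "1 \<le> i" and "i \<le> length ws"
  shows "real (sum_list (take i ws)) \<ge> (3 * real (ws ! (i - 1)) - 1) / 2"
proof -
  have wp: "weighing_partition n ws" and so: "sorted ws"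
    using assms(2) unfolding feasible_partition_def by auto
  obtain k where ik: "i = Suc k" using assms(3) by (cases i) auto
  have kl: "k < length ws" using ik assms(4) by simp
  have "ws ! k \<le> 2 * sum_list (take k ws) + 1" using key[OF wp so kl] .
  moreover have "sum_list (take i ws) = sum_list (take k ws) + ws ! k"
    using ik kl by (simp add: take_Suc_conv_app_nth)
  ultimately show ?thesis using ik by simp
qed

end
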